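(* Let $(\mathcal X,\mathcal B,\pi)$ be a measure space with $\pi$ $\sigma$-finite, let $r:\mathcal X\to\mathbb R$ be measurable, let $\{\varepsilon(x):x\in\mathcal X\}$ be a real-valued random field and $\varepsilon_1,\varepsilon_2,\dots$ i.i.d. copies of it, independent of all sampled points, and fix an integer $K\ge 2$. Let $p_0\in\mathcal P_\pi$ satisfy $\int p_0|\log p_0|\,d\pi<\infty$. Define recursively, for $t\in\mathbb N$, $p_{t+1}$ as a maximizer over $p\in\mathcal P_\pi$ of $$\mathcal L(p;p_t,K,0):=\mathbb E\bigl[\log p(\widehat X)\bigr],$$ where $X_1,\dots,X_K$ are i.i.d. with density $p_t$ and $\widehat X=X_I$ is the Plackett–Luce curated sample described in the context. Then for every $t\in\mathbb N$, $\mathcal L(p;p_t,K,0)=\mathbb E_{X\sim p_t}\bigl[\log p(X)\,H^K_{p_t}(X)\bigr]$, this functional has a unique maximizer over $p\in\mathcal P_\pi$, and the maximizer is $$p_{t+1}(x)=p_t(x)\,H^K_{p_t}(x),\qquad x\in\mathcal X.$$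
   Context: $\mathcal P_\pi$ is the set of probability measures on $(\mathcal X,\mathcal B)$ absolutely continuous w.r.t. $\pi$, identified with their densities. Plackett–Luce curation: given $X_1,\dots,X_K$ i.i.d. with density $p$ and noise copies $\varepsilon_1,\dots,\varepsilon_K$ (independent of the $X$'s), set $\tilde w_k=e^{r(X_k)+\varepsilon_k(X_k)}$ and draw an index $I\in\{1,\dots,K\}$ with $\mathbb P(I=k\mid X_{1:K},\varepsilon_{1:K})=\tilde w_k/\sum_{i=1}^K\tilde w_i$; the curated sample is $\widehat X=X_I$. The choice kernel is $$H^K_p(x):=\mathbb E\Bigl[K\,\frac{e^{r(x)+\varepsilon(x)}}{e^{r(x)+\varepsilon(x)}+\sum_{k=1}^{K-1}e^{r(X_k)+\varepsilon_k(X_k)}}\Bigr],$$ with $X_1,\dots,X_{K-1}$ i.i.d. with density $p$ and $\varepsilon,\varepsilon_1,\dots,\varepsilon_{K-1}$ i.i.d. copies of the noise field, all independent. *)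

theory Defs
  imports "HOL-Probability.Probability"
begin

definition dens_set :: "'a measure \<Rightarrow> ('a \<Rightarrow> real) set" where
  "dens_set M = {p. p \<in> borel_measurable M \<and> (\<forall>x\<in>space M. 0 \<le> p x)
                    \<and> (\<integral>\<^sup>+x. ennreal (p x) \<partial>M) = 1}"

definition elog :: "real \<Rightarrow> ereal" where
  "elog y = (if 0 < y then ereal (ln y) else -\<infinity>)"

definition eexp :: "'a measure \<Rightarrow> ('a \<Rightarrow> ereal) \<Rightarrow> ereal" where
  "eexp M f = enn2ereal (\<integral>\<^sup>+x. e2ennreal (f x) \<partial>M) - enn2ereal (\<integral>\<^sup>+x. e2ennreal (- f x) \<partial>M)"

text \<open>L(q; pt, K, 0) = E[log q(X_I)] for the Plackett-Luce curated sample, with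
  X_1..X_K iid ~ pt (indices 0..K-1), noise copies iid ~ the noise law N (independent
  of the X's); the expectation over the index I given (X, eps) is written out as the
  finite sum of the conditional choice probabilities.\<close>
definition PL_obj :: "'a measure \<Rightarrow> 'w measure \<Rightarrow> ('a \<Rightarrow> real) \<Rightarrow> ('w \<Rightarrow> 'a \<Rightarrow> real)
    \<Rightarrow> nat \<Rightarrow> ('a \<Rightarrow> real) \<Rightarrow> ('a \<Rightarrow> real) \<Rightarrow> ereal" where
  "PL_obj M N r \<epsilon> K pt q =
     eexp (PiM {..<K} (\<lambda>_. density M (\<lambda>x. ennreal (pt x))) \<Otimes>\<^sub>M PiM {..<K} (\<lambda>_. N))
       (\<lambda>(xs, es). \<Sum>k<K. ereal (exp (r (xs k) + \<epsilon> (es k) (xs k))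
                          / (\<Sum>i<K. exp (r (xs i) + \<epsilon> (es i) (xs i)))) * elog (q (xs k)))"

definition choice_kernel :: "'a measure \<Rightarrow> 'w measure \<Rightarrow> ('a \<Rightarrow> real) \<Rightarrow> ('w \<Rightarrow> 'a \<Rightarrow> real)
    \<Rightarrow> nat \<Rightarrow> ('a \<Rightarrow> real) \<Rightarrow> 'a \<Rightarrow> real" where
  "choice_kernel M N r \<epsilon> K p x =
     integral\<^sup>L (N \<Otimes>\<^sub>M (PiM {..<K-1} (\<lambda>_. N) \<Otimes>\<^sub>M PiM {..<K-1} (\<lambda>_. density M (\<lambda>y. ennreal (p y)))))
       (\<lambda>(\<omega>, es, xs). real K * exp (r x + \<epsilon> \<omega> x)
            / (exp (r x + \<epsilon> \<omega> x) + (\<Sum>k<K-1. exp (r (xs k) + \<epsilon> (es k) (xs k)))))"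

definition is_PL_maximizer :: "'a measure \<Rightarrow> 'w measure \<Rightarrow> ('a \<Rightarrow> real) \<Rightarrow> ('w \<Rightarrow> 'a \<Rightarrow> real)
    \<Rightarrow> nat \<Rightarrow> ('a \<Rightarrow> real) \<Rightarrow> ('a \<Rightarrow> real) \<Rightarrow> bool" where
  "is_PL_maximizer M N r \<epsilon> K pt q \<longleftrightarrow>
     q \<in> dens_set M \<and> (\<forall>q'\<in>dens_set M. PL_obj M N r \<epsilon> K pt q' \<le> PL_obj M N r \<epsilon> K pt q)"

end

theory Submission
  imports Defs
begin


definition lpos :: "real \<Rightarrow> ennreal" where
  "lpos y = (if 0 < y then ennreal (max 0 (ln y)) else 0)"
definition lneg :: "real \<Rightarrow> ennreal" where
  "lneg y = (if 0 < y then ennreal (max 0 (- ln y)) else top)"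

lemma lpos_meas[measurable]: "lpos \<in> borel_measurable borel"
  unfolding lpos_def by measurable
lemma lneg_meas[measurable]: "lneg \<in> borel_measurable borel"
  unfolding lneg_def by measurable

lemma gibbs_pt: fixes f q :: real assumes "0 < f" "0 < q"
  shows "f * ln q \<le> f * ln f + q - f"
proof -
  have "ln (q/f) \<le> q/f - 1" using assms by (intro ln_le_minus_one) simp
  then have "f * ln (q/f) \<le> f * (q/f - 1)" using assms by (intro mult_left_mono) auto
  moreover have "ln (q/f) = ln q - ln f" using assms by (simp add: ln_div)
  moreover have "f * (q/f - 1) = q - f" using assms by (simp add: field_simps)
  ultimately show ?thesis by (simp add: algebra_simps)
qed

lemma gibbs_pt_eq: fixes f q :: real assumes "0 < f" "0 < q" "f * ln q = f * ln f + q - f"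
  shows "q = f"
proof -
  have "ln (q/f) = ln q - ln f" using assms by (simp add: ln_div)
  also have "\<dots> = q/f - 1" using assms by (simp add: field_simps)
  finally have "q/f = 1" using assms by (intro ln_eq_minus_one) auto
  then show ?thesis using assms by simp
qed

lemma ineq1: fixes f q :: real assumes "0 \<le> f" "0 \<le> q"
  shows "ennreal f * lpos q \<le> ennreal f * lpos f + ennreal q"
proof (cases "0 < f \<and> 0 < q")
  case True
  then have f: "0 < f" and q: "0 < q" by auto
  have g: "f * ln q \<le> f * ln f + q - f" using gibbs_pt[OF f q] .
  have "f * max 0 (ln q) \<le> f * max 0 (ln f) + q"
  proof (cases "ln q \<le> 0")
    case True then show ?thesis using f q by (simp add: max_def)
  next
    case False
    have "f * ln f \<le> f * max 0 (ln f)" using f by (intro mult_left_mono) auto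
    moreover have "f * max 0 (ln q) = f * ln q" using False by simp
    ultimately show ?thesis using g f by linarith
  qed
  then have "ennreal (f * max 0 (ln q)) \<le> ennreal (f * max 0 (ln f) + q)"
    by (intro ennreal_leI)
  then show ?thesis using f q by (simp add: lpos_def ennreal_mult)
next
  case False
  then have "f = 0 \<or> q = 0" using assms by auto
  then show ?thesis by (auto simp: lpos_def)
qed

lemma ineq2: fixes f q :: real assumes "0 \<le> f" "0 \<le> q"
  shows "ennreal f * lpos q + ennreal f * lneg f + ennreal f \<le> ennreal f * lpos f + ennreal f * lneg q + ennreal q"
proof (cases "f = 0")
  case True then show ?thesis by simp
next
  case False then have f: "0 < f" using assms by simp
  show ?thesis
  proof (cases "q = 0")
    case True then show ?thesis using f by (simp add: lneg_def lpos_def)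
  next
    case False then have q: "0 < q" using assms by simp
    have g: "f * ln q \<le> f * ln f + q - f" using gibbs_pt[OF f q] .
    define a where "a = max 0 (ln q)"
    define b where "b = max 0 (- ln q)"
    define c where "c = max 0 (ln f)"
    define d where "d = max 0 (- ln f)"
    have lq: "ln q = a - b" and lf: "ln f = c - d" by (auto simp: a_def b_def c_def d_def max_def)
    have nn: "0 \<le> a" "0 \<le> b" "0 \<le> c" "0 \<le> d" by (auto simp: a_def b_def c_def d_def)
    have "f * a + f * d + f \<le> f * c + f * b + q"
      using g unfolding lq lf by (simp add: algebra_simps)
    then have "ennreal (f * a + f * d + f) \<le> ennreal (f * c + f * b + q)"
      by (intro ennreal_leI)
    then show ?thesis using f q nn
      by (simp add: lpos_def lneg_def ennreal_mult a_def[symmetric] b_def[symmetric] c_def[symmetric] d_def[symmetric])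
  qed
qed

lemma ineq2_eq: fixes f q :: real assumes "0 \<le> f" "0 \<le> q"
  and eq: "ennreal f * lpos q + ennreal f * lneg f + ennreal f = ennreal f * lpos f + ennreal f * lneg q + ennreal q"
  shows "q = f"
proof (cases "f = 0")
  case True then show ?thesis using eq assms by (simp add: ennreal_eq_0_iff)
next
  case False then have f: "0 < f" using assms by simp
  show ?thesis
  proof (cases "q = 0")
    case True then show ?thesis using f eq by (simp add: lneg_def lpos_def ennreal_mult_eq_top_iff)
  next
    case False then have q: "0 < q" using assms by simp
    define a where "a = max 0 (ln q)"
    define b where "b = max 0 (- ln q)"
    define c where "c = max 0 (ln f)"
    define d where "d = max 0 (- ln f)"
    have lq: "ln q = a - b" and lf: "ln f = c - d" by (auto simp: a_def b_def c_def d_def max_def)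
    have nn: "0 \<le> a" "0 \<le> b" "0 \<le> c" "0 \<le> d" by (auto simp: a_def b_def c_def d_def)
    have "ennreal (f * a + f * d + f) = ennreal (f * c + f * b + q)"
      using eq f q nn
      by (simp add: lpos_def lneg_def ennreal_mult a_def[symmetric] b_def[symmetric] c_def[symmetric] d_def[symmetric])
    then have "f * a + f * d + f = f * c + f * b + q"
      using f q nn by (subst (asm) ennreal_inj) auto
    then have "f * ln q = f * ln f + q - f" unfolding lq lf by (simp add: algebra_simps)
    then show ?thesis using gibbs_pt_eq f q by blast
  qed
qed


lemma ereal_aux1:
  fixes a b c d :: ennreal
  assumes "a < top" "c < top" "d < top" "a + d + 1 \<le> c + b + 1"
  shows "enn2ereal a - enn2ereal b \<le> enn2ereal c - enn2ereal d"
proof (cases "b = top")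
  case True
  obtain a' where a: "a = ennreal a'" "0 \<le> a'" using assms(1) by (cases a) auto
  then show ?thesis using True by simp
next
  case False
  obtain a' where a: "a = ennreal a'" "0 \<le> a'" using assms(1) by (cases a) auto
  obtain b' where b: "b = ennreal b'" "0 \<le> b'" using False by (cases b) auto
  obtain c' where c: "c = ennreal c'" "0 \<le> c'" using assms(2) by (cases c) auto
  obtain d' where d: "d = ennreal d'" "0 \<le> d'" using assms(3) by (cases d) auto
  have "enn2ereal (a + d + 1) \<le> enn2ereal (c + b + 1)" using assms(4) less_eq_ennreal.rep_eq by metis
  then have "ereal a' + ereal d' + 1 \<le> ereal c' + ereal b' + 1" using a b c d
    by (simp add: plus_ennreal.rep_eq one_ennreal.rep_eq)
  then have "a' + d' \<le> c' + b'" by simp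
  then show ?thesis using a b c d by simp
qed

lemma ereal_aux2:
  fixes a b c d :: ennreal
  assumes "a < top" "c < top" "d < top" "enn2ereal a - enn2ereal b = enn2ereal c - enn2ereal d"
  shows "b < top" "a + d + 1 = c + b + 1"
proof -
  obtain a' where a: "a = ennreal a'" "0 \<le> a'" using assms(1) by (cases a) auto
  obtain c' where c: "c = ennreal c'" "0 \<le> c'" using assms(2) by (cases c) auto
  obtain d' where d: "d = ennreal d'" "0 \<le> d'" using assms(3) by (cases d) auto
  show bt: "b < top"
  proof (rule ccontr)
    assume "\<not> b < top" then have "b = top" by (metis less_top)
    then show False using assms(4) a c d by simp
  qed
  obtain b' where b: "b = ennreal b'" "0 \<le> b'" using bt by (cases b) auto
  have "a' - b' = c' - d'" using assms(4) a b c d by simp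
  then have "ereal a' + ereal d' + 1 = ereal c' + ereal b' + 1" by simp
  then have "enn2ereal (a + d + 1) = enn2ereal (c + b + 1)" using a b c d
    by (simp add: plus_ennreal.rep_eq one_ennreal.rep_eq)
  then show "a + d + 1 = c + b + 1" by (metis e2ennreal_enn2ereal)
qed

lemma ereal_aux3:
  fixes x y u v :: ennreal
  assumes "x + v = u + y" "x \<le> u" "u < top"
  shows "enn2ereal x - enn2ereal y = enn2ereal u - enn2ereal v"
proof (cases "y = top")
  case True
  then have "x + v = top" using assms(1) by simp
  moreover have "x < top" using assms(2,3) by (meson order.strict_trans1)
  ultimately have "v = top" by (auto simp: top_unique)
  obtain x' where x: "x = ennreal x'" "0 \<le> x'" using \<open>x < top\<close> by (cases x) auto
  obtain u' where u: "u = ennreal u'" "0 \<le> u'" using assms(3) by (cases u) auto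
  show ?thesis using True \<open>v = top\<close> x u by simp
next
  case False
  have xt: "x < top" using assms(2,3) by (meson order.strict_trans1)
  obtain x' where x: "x = ennreal x'" "0 \<le> x'" using xt by (cases x) auto
  obtain u' where u: "u = ennreal u'" "0 \<le> u'" using assms(3) by (cases u) auto
  obtain y' where y: "y = ennreal y'" "0 \<le> y'" using False by (cases y) auto
  have vt: "v < top"
  proof (rule ccontr)
    assume "\<not> v < top" then have "v = top" by (metis less_top)
    then have "u + y = top" using assms(1) by simp
    then show False using u y by simp
  qed
  obtain v' where v: "v = ennreal v'" "0 \<le> v'" using vt by (cases v) auto
  have "ennreal (x' + v') = ennreal (u' + y')" using assms(1) x y u v by simp
  then have "x' + v' = u' + y'" using x y u v by (subst (asm) ennreal_inj) auto
  then have "ereal x' - ereal y' = ereal u' - ereal v'" by simp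
  then show ?thesis using x y u v by simp
qed




lemma gibbs:
  fixes M :: "'a measure"
  assumes f: "f \<in> dens_set M" and q: "q \<in> dens_set M"
    and fp: "(\<integral>\<^sup>+x. ennreal (f x) * lpos (f x) \<partial>M) < top"
    and fm: "(\<integral>\<^sup>+x. ennreal (f x) * lneg (f x) \<partial>M) < top"
  shows gibbs_fin: "(\<integral>\<^sup>+x. ennreal (f x) * lpos (q x) \<partial>M) < top"
    and gibbs_le: "enn2ereal (\<integral>\<^sup>+x. ennreal (f x) * lpos (q x) \<partial>M) - enn2ereal (\<integral>\<^sup>+x. ennreal (f x) * lneg (q x) \<partial>M)
        \<le> enn2ereal (\<integral>\<^sup>+x. ennreal (f x) * lpos (f x) \<partial>M) - enn2ereal (\<integral>\<^sup>+x. ennreal (f x) * lneg (f x) \<partial>M)"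
    and gibbs_eq: "enn2ereal (\<integral>\<^sup>+x. ennreal (f x) * lpos (q x) \<partial>M) - enn2ereal (\<integral>\<^sup>+x. ennreal (f x) * lneg (q x) \<partial>M)
        = enn2ereal (\<integral>\<^sup>+x. ennreal (f x) * lpos (f x) \<partial>M) - enn2ereal (\<integral>\<^sup>+x. ennreal (f x) * lneg (f x) \<partial>M)
        \<Longrightarrow> AE x in M. q x = f x"
proof -
  have fmeas[measurable]: "f \<in> borel_measurable M" and f0: "\<And>x. x \<in> space M \<Longrightarrow> 0 \<le> f x"
    and f1: "(\<integral>\<^sup>+x. ennreal (f x) \<partial>M) = 1" using f by (auto simp: dens_set_def)
  have qmeas[measurable]: "q \<in> borel_measurable M" and q0: "\<And>x. x \<in> space M \<Longrightarrow> 0 \<le> q x"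
    and q1: "(\<integral>\<^sup>+x. ennreal (q x) \<partial>M) = 1" using q by (auto simp: dens_set_def)
  define a where "a = (\<integral>\<^sup>+x. ennreal (f x) * lpos (q x) \<partial>M)"
  define b where "b = (\<integral>\<^sup>+x. ennreal (f x) * lneg (q x) \<partial>M)"
  define c where "c = (\<integral>\<^sup>+x. ennreal (f x) * lpos (f x) \<partial>M)"
  define d where "d = (\<integral>\<^sup>+x. ennreal (f x) * lneg (f x) \<partial>M)"
  have ct: "c < top" and dt: "d < top" using fp fm by (simp_all add: c_def d_def)
  have "a \<le> (\<integral>\<^sup>+x. ennreal (f x) * lpos (f x) + ennreal (q x) \<partial>M)"
    unfolding a_def by (intro nn_integral_mono) (use ineq1 f0 q0 in auto)
  also have "\<dots> = c + 1" unfolding c_def using q1 by (subst nn_integral_add) auto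
  finally have at: "a < top" using ct by (metis ennreal_add_eq_top ennreal_one_less_top less_top order.strict_trans1 top.not_eq_extremum)
  then show "(\<integral>\<^sup>+x. ennreal (f x) * lpos (q x) \<partial>M) < top" unfolding a_def .
  define L where "L x = ennreal (f x) * lpos (q x) + ennreal (f x) * lneg (f x) + ennreal (f x)" for x
  define R where "R x = ennreal (f x) * lpos (f x) + ennreal (f x) * lneg (q x) + ennreal (q x)" for x
  have Lm[measurable]: "L \<in> borel_measurable M" unfolding L_def by measurable
  have Rm[measurable]: "R \<in> borel_measurable M" unfolding R_def by measurable
  have IL: "(\<integral>\<^sup>+x. L x \<partial>M) = a + d + 1"
    unfolding L_def a_def d_def f1[symmetric] by (simp add: nn_integral_add)
  have IR: "(\<integral>\<^sup>+x. R x \<partial>M) = c + b + 1"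
    unfolding R_def c_def b_def q1[symmetric] by (simp add: nn_integral_add)
  have LR: "\<And>x. x \<in> space M \<Longrightarrow> L x \<le> R x" unfolding L_def R_def using ineq2 f0 q0 by auto
  have "a + d + 1 \<le> c + b + 1" unfolding IL[symmetric] IR[symmetric]
    by (intro nn_integral_mono LR)
  then show "enn2ereal (\<integral>\<^sup>+x. ennreal (f x) * lpos (q x) \<partial>M) - enn2ereal (\<integral>\<^sup>+x. ennreal (f x) * lneg (q x) \<partial>M)
        \<le> enn2ereal (\<integral>\<^sup>+x. ennreal (f x) * lpos (f x) \<partial>M) - enn2ereal (\<integral>\<^sup>+x. ennreal (f x) * lneg (f x) \<partial>M)"
    using ereal_aux1[OF at ct dt] unfolding a_def b_def c_def d_def by blast
  assume E: "enn2ereal (\<integral>\<^sup>+x. ennreal (f x) * lpos (q x) \<partial>M) - enn2ereal (\<integral>\<^sup>+x. ennreal (f x) * lneg (q x) \<partial>M)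
        = enn2ereal (\<integral>\<^sup>+x. ennreal (f x) * lpos (f x) \<partial>M) - enn2ereal (\<integral>\<^sup>+x. ennreal (f x) * lneg (f x) \<partial>M)"
  then have E': "enn2ereal a - enn2ereal b = enn2ereal c - enn2ereal d" unfolding a_def b_def c_def d_def .
  have eqs: "a + d + 1 = c + b + 1" using ereal_aux2[OF at ct dt E'] by simp
  have Lt: "(\<integral>\<^sup>+x. L x \<partial>M) \<noteq> top" using IL at dt by (simp add: ennreal_add_eq_top less_top)
  have "(\<integral>\<^sup>+x. R x - L x \<partial>M) = (\<integral>\<^sup>+x. R x \<partial>M) - (\<integral>\<^sup>+x. L x \<partial>M)"
    by (rule nn_integral_diff) (use Lt LR in auto)
  also have "\<dots> = 0" unfolding IL IR eqs[symmetric] using IL Lt by (simp add: diff_eq_0_iff_ennreal top.not_eq_extremum)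
  finally have "AE x in M. R x - L x = 0" by (subst (asm) nn_integral_0_iff_AE) auto
  then show "AE x in M. q x = f x"
  proof (rule AE_mp, intro AE_I2 impI)
    fix x assume x: "x \<in> space M" and "R x - L x = 0"
    then have "R x \<le> L x" by (simp add: diff_eq_0_iff_ennreal)
    with LR[OF x] have "L x = R x" by simp
    then show "q x = f x" unfolding L_def R_def using ineq2_eq f0 q0 x by blast
  qed
qed


lemma pw_pos: fixes p h y :: real assumes "0 \<le> p" "0 \<le> h"
  shows "ennreal p * e2ennreal (elog y * ereal h) = ennreal (p*h) * lpos y"
proof (cases "0 < y")
  case True
  show ?thesis
  proof (cases "0 \<le> ln y")
    case True
    then show ?thesis using \<open>0 < y\<close> assms by (simp add: elog_def lpos_def ennreal_mult mult.commute mult.left_commute)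
  next
    case False
    then have "ln y * h \<le> 0" using assms by (simp add: mult_nonpos_nonneg)
    then show ?thesis using False \<open>0 < y\<close> assms by (simp add: elog_def lpos_def ennreal_neg max_def)
  qed
next
  case False
  then show ?thesis using assms by (cases "h = 0") (auto simp: elog_def lpos_def e2ennreal_neg)
qed

lemma pw_neg: fixes p h y :: real assumes "0 \<le> p" "0 \<le> h"
  shows "ennreal p * e2ennreal (- (elog y * ereal h)) = ennreal (p*h) * lneg y"
proof (cases "0 < y")
  case True
  show ?thesis
  proof (cases "ln y \<le> 0")
    case True
    have e: "ennreal (- (ln y * h)) = ennreal (- ln y) * ennreal h"
      using True assms by (simp add: ennreal_mult[symmetric])
    have "ennreal p * ennreal (- (ln y * h)) = ennreal (p*h) * ennreal (- ln y)"
      unfolding e using assms by (simp add: ennreal_mult mult_ac)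
    then show ?thesis using True \<open>0 < y\<close> assms by (simp add: elog_def lneg_def max_def)
  next
    case False
    then have "- (ln y * h) \<le> 0" using assms by simp
    then show ?thesis using False \<open>0 < y\<close> assms by (simp add: elog_def lneg_def ennreal_neg max_def)
  qed
next
  case False
  then show ?thesis using assms
    by (cases "h = 0"; cases "p = 0") (auto simp: elog_def lneg_def ennreal_mult_top ennreal_eq_0_iff mult_le_0_iff)
qed

lemma elog_meas[measurable]: "elog \<in> borel_measurable borel"
  unfolding elog_def by measurable

lemma obj_density:
  fixes M :: "'a measure"
  assumes p: "p \<in> dens_set M" and Hm[measurable]: "H \<in> borel_measurable M"
    and H0: "\<And>x. x \<in> space M \<Longrightarrow> 0 \<le> H x" and qm[measurable]: "q \<in> borel_measurable M"
  shows "eexp (density M (\<lambda>x. ennreal (p x))) (\<lambda>x. elog (q x) * ereal (H x))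
    = enn2ereal (\<integral>\<^sup>+x. ennreal (p x * H x) * lpos (q x) \<partial>M) - enn2ereal (\<integral>\<^sup>+x. ennreal (p x * H x) * lneg (q x) \<partial>M)"
proof -
  have pm[measurable]: "p \<in> borel_measurable M" and p0: "\<And>x. x \<in> space M \<Longrightarrow> 0 \<le> p x"
    using p by (auto simp: dens_set_def)
  show ?thesis unfolding eexp_def
    by (subst (1 2) nn_integral_density)
       (auto intro!: arg_cong2[where f="\<lambda>a b. enn2ereal a - enn2ereal b"] nn_integral_cong
          simp: pw_pos pw_neg p0 H0)
qed

lemma ereal_sum_minf:
  fixes g :: "nat \<Rightarrow> ereal"
  assumes "finite I" "j \<in> I" "g j = -\<infinity>" "\<And>k. k \<in> I \<Longrightarrow> g k \<noteq> \<infinity>"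
  shows "sum g I = -\<infinity>"
proof -
  have "sum g I = g j + sum g (I - {j})" using assms by (simp add: sum.remove)
  moreover have "sum g (I - {j}) \<noteq> \<infinity>" using assms by (subst sum_Pinfty) auto
  ultimately show ?thesis using assms(3) by simp
qed

lemma pl_pw:
  fixes ws ys :: "nat \<Rightarrow> real"
  assumes ws: "\<And>k. k < K \<Longrightarrow> 0 < ws k"
  shows "e2ennreal (\<Sum>k<K. ereal (ws k) * elog (ys k)) + (\<Sum>k<K. ennreal (ws k) * lneg (ys k))
      = (\<Sum>k<K. ennreal (ws k) * lpos (ys k)) + e2ennreal (- (\<Sum>k<K. ereal (ws k) * elog (ys k)))"
    and "e2ennreal (\<Sum>k<K. ereal (ws k) * elog (ys k)) \<le> (\<Sum>k<K. ennreal (ws k) * lpos (ys k))"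
proof -
  have "(e2ennreal (\<Sum>k<K. ereal (ws k) * elog (ys k)) + (\<Sum>k<K. ennreal (ws k) * lneg (ys k))
      = (\<Sum>k<K. ennreal (ws k) * lpos (ys k)) + e2ennreal (- (\<Sum>k<K. ereal (ws k) * elog (ys k))))
    \<and> e2ennreal (\<Sum>k<K. ereal (ws k) * elog (ys k)) \<le> (\<Sum>k<K. ennreal (ws k) * lpos (ys k))"
  proof (cases "\<forall>k<K. 0 < ys k")
    case True
    define A where "A = (\<Sum>k<K. ws k * max 0 (ln (ys k)))"
    define B where "B = (\<Sum>k<K. ws k * max 0 (- ln (ys k)))"
    define T where "T = (\<Sum>k<K. ws k * ln (ys k))"
    have A0: "0 \<le> A" unfolding A_def using ws by (intro sum_nonneg) (simp add: less_imp_le)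
    have B0: "0 \<le> B" unfolding B_def using ws by (intro sum_nonneg) (simp add: less_imp_le)
    have TAB: "T = A - B" unfolding T_def A_def B_def sum_subtractf[symmetric]
      by (intro sum.cong refl) (simp add: max_def algebra_simps)
    have S: "(\<Sum>k<K. ereal (ws k) * elog (ys k)) = ereal T"
      unfolding T_def using True by (simp add: elog_def)
    have a: "(\<Sum>k<K. ennreal (ws k) * lpos (ys k)) = ennreal A"
      unfolding A_def using True ws
      by (subst sum_ennreal[symmetric]) (auto intro!: sum.cong simp: lpos_def ennreal_mult less_imp_le)
    have b: "(\<Sum>k<K. ennreal (ws k) * lneg (ys k)) = ennreal B"
      unfolding B_def using True ws
      by (subst sum_ennreal[symmetric]) (auto intro!: sum.cong simp: lneg_def ennreal_mult less_imp_le)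
    have "e2ennreal (ereal T) + ennreal B = ennreal A + e2ennreal (- ereal T) \<and> e2ennreal (ereal T) \<le> ennreal A"
      by (cases "0 \<le> T") (use TAB A0 B0 in \<open>simp_all add: ennreal_neg flip: ennreal_plus\<close>)
    then show ?thesis unfolding S a b .
  next
    case False
    then obtain j where j: "j < K" "ys j \<le> 0" by auto
    have ws': "\<forall>k<K. 0 < ws k" using ws by auto
    have S: "(\<Sum>k<K. ereal (ws k) * elog (ys k)) = -\<infinity>"
      using j ws[of j] ws' by (intro ereal_sum_minf[of _ j]) (auto simp: elog_def)
    have "(\<Sum>k<K. ennreal (ws k) * lneg (ys k)) = ennreal (ws j) * lneg (ys j) + (\<Sum>k\<in>{..<K}-{j}. ennreal (ws k) * lneg (ys k))"
      using j by (simp add: sum.remove)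
    also have "\<dots> = top" using j ws[of j] by (simp add: lneg_def ennreal_mult_top)
    finally show ?thesis using S by (simp add: e2ennreal_neg)
  qed
  then show "e2ennreal (\<Sum>k<K. ereal (ws k) * elog (ys k)) + (\<Sum>k<K. ennreal (ws k) * lneg (ys k))
      = (\<Sum>k<K. ennreal (ws k) * lpos (ys k)) + e2ennreal (- (\<Sum>k<K. ereal (ws k) * elog (ys k)))"
    and "e2ennreal (\<Sum>k<K. ereal (ws k) * elog (ys k)) \<le> (\<Sum>k<K. ennreal (ws k) * lpos (ys k))" by auto
qed



lemma ent_split: fixes p :: real assumes "0 \<le> p"
  shows "ennreal (p * \<bar>ln p\<bar>) = ennreal p * lpos p + ennreal p * lneg p"
proof (cases "p = 0")
  case True then show ?thesis by (simp add: lpos_def lneg_def)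
next
  case False
  then have p: "0 < p" using assms by simp
  have "p * \<bar>ln p\<bar> = p * max 0 (ln p) + p * max 0 (- ln p)" by (simp add: abs_if max_def algebra_simps)
  then have "ennreal (p * \<bar>ln p\<bar>) = ennreal (p * max 0 (ln p)) + ennreal (p * max 0 (- ln p))"
    using p by simp
  then show ?thesis using p by (simp add: lpos_def lneg_def ennreal_mult)
qed

lemma hlog: fixes h :: real assumes "0 < h" shows "h * max 0 (- ln h) \<le> 1"
proof (cases "h \<le> 1")
  case True
  have "ln (1/h) \<le> 1/h - 1" using assms by (intro ln_le_minus_one) simp
  then have "- ln h \<le> 1/h - 1" using assms by (simp add: ln_div)
  then have "h * (- ln h) \<le> h * (1/h - 1)" using assms by (intro mult_left_mono) auto
  also have "\<dots> = 1 - h" using assms by (simp add: field_simps)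
  finally have "h * (- ln h) \<le> 1" using assms by simp
  moreover have "0 \<le> - ln h" using True assms by simp
  ultimately show ?thesis by (simp add: max_def)
next
  case False then show ?thesis by (simp add: max_def)
qed

lemma pf1: fixes p h k :: real assumes "0 \<le> p" "0 \<le> h" "h \<le> k" "1 \<le> k"
  shows "ennreal (p*h) * lpos (p*h) \<le> ennreal (k * ln k) * ennreal p + ennreal k * (ennreal p * lpos p)"
proof (cases "0 < p * h")
  case True
  then have p: "0 < p" and h: "0 < h" using assms by (auto simp: zero_less_mult_iff)
  have lk: "0 \<le> ln k" using assms by simp
  have "ln (p*h) = ln p + ln h" using p h by (simp add: ln_mult)
  also have "\<dots> \<le> ln p + ln k" using h assms by simp
  finally have "max 0 (ln (p*h)) \<le> max 0 (ln p) + ln k" using lk by (simp add: max_def)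
  then have "p*h * max 0 (ln (p*h)) \<le> p*h * (max 0 (ln p) + ln k)"
    using p h by (intro mult_left_mono) auto
  also have "\<dots> \<le> k*p * (max 0 (ln p) + ln k)"
    using p h assms lk by (intro mult_right_mono) (auto simp: mult.commute)
  also have "\<dots> = k * ln k * p + k * (p * max 0 (ln p))" by (simp add: algebra_simps)
  finally have le: "p*h * max 0 (ln (p*h)) \<le> k * ln k * p + k * (p * max 0 (ln p))" .
  have "ennreal (p*h) * lpos (p*h) = ennreal (p*h * max 0 (ln (p*h)))"
    using True by (simp add: lpos_def ennreal_mult)
  also have "\<dots> \<le> ennreal (k * ln k * p + k * (p * max 0 (ln p)))" using le by (rule ennreal_leI)
  also have "\<dots> = ennreal (k * ln k) * ennreal p + ennreal k * (ennreal p * lpos p)"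
    using p lk assms by (simp add: lpos_def ennreal_mult)
  finally show ?thesis .
next
  case False
  then show ?thesis by (simp add: lpos_def)
qed

lemma pf2: fixes p h k :: real assumes "0 \<le> p" "0 \<le> h" "h \<le> k" "1 \<le> k"
  shows "ennreal (p*h) * lneg (p*h) \<le> ennreal k * (ennreal p * lneg p) + ennreal p"
proof (cases "0 < p * h")
  case True
  then have p: "0 < p" and h: "0 < h" using assms by (auto simp: zero_less_mult_iff)
  have "- ln (p*h) = - ln p + - ln h" using p h by (simp add: ln_mult)
  then have "max 0 (- ln (p*h)) \<le> max 0 (- ln p) + max 0 (- ln h)" by (simp add: max_def)
  then have "p*h * max 0 (- ln (p*h)) \<le> p*h * (max 0 (- ln p) + max 0 (- ln h))"
    using p h by (intro mult_left_mono) auto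
  also have "\<dots> = h * (p * max 0 (- ln p)) + p * (h * max 0 (- ln h))" by (simp add: algebra_simps)
  also have "\<dots> \<le> k * (p * max 0 (- ln p)) + p * 1"
    using p h assms hlog[OF h] by (intro add_mono mult_right_mono mult_left_mono) auto
  finally have le: "p*h * max 0 (- ln (p*h)) \<le> k * (p * max 0 (- ln p)) + p" by simp
  have "ennreal (p*h) * lneg (p*h) = ennreal (p*h * max 0 (- ln (p*h)))"
    using True by (simp add: lneg_def ennreal_mult)
  also have "\<dots> \<le> ennreal (k * (p * max 0 (- ln p)) + p)" using le by (rule ennreal_leI)
  also have "\<dots> = ennreal k * (ennreal p * lneg p) + ennreal p"
    using p assms by (simp add: lneg_def ennreal_mult)
  finally show ?thesis .
next
  case False
  then have "p * h = 0" using assms by (metis mult_nonneg_nonneg order_less_le)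
  then show ?thesis by (metis ennreal_0 mult_zero_left zero_le)
qed

lemma ent_parts:
  assumes p: "p \<in> dens_set M" and ent: "(\<integral>\<^sup>+x. ennreal (p x * \<bar>ln (p x)\<bar>) \<partial>M) < \<infinity>"
  shows "(\<integral>\<^sup>+x. ennreal (p x) * lpos (p x) \<partial>M) < \<infinity>" "(\<integral>\<^sup>+x. ennreal (p x) * lneg (p x) \<partial>M) < \<infinity>"
proof -
  have p0: "\<And>x. x \<in> space M \<Longrightarrow> 0 \<le> p x" using p by (auto simp: dens_set_def)
  have "(\<integral>\<^sup>+x. ennreal (p x) * lpos (p x) \<partial>M) \<le> (\<integral>\<^sup>+x. ennreal (p x * \<bar>ln (p x)\<bar>) \<partial>M)"
    by (intro nn_integral_mono) (simp add: ent_split p0)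
  then show "(\<integral>\<^sup>+x. ennreal (p x) * lpos (p x) \<partial>M) < \<infinity>" using ent by (simp add: le_less_trans)
  have "(\<integral>\<^sup>+x. ennreal (p x) * lneg (p x) \<partial>M) \<le> (\<integral>\<^sup>+x. ennreal (p x * \<bar>ln (p x)\<bar>) \<partial>M)"
    by (intro nn_integral_mono) (simp add: ent_split p0)
  then show "(\<integral>\<^sup>+x. ennreal (p x) * lneg (p x) \<partial>M) < \<infinity>" using ent by (simp add: le_less_trans)
qed

lemma ent_f:
  fixes M :: "'a measure" and k :: real
  assumes p: "p \<in> dens_set M" and ent: "(\<integral>\<^sup>+x. ennreal (p x * \<bar>ln (p x)\<bar>) \<partial>M) < \<infinity>"
    and Hm[measurable]: "H \<in> borel_measurable M" and H0: "\<And>x. x \<in> space M \<Longrightarrow> 0 \<le> H x"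
    and Hk: "\<And>x. x \<in> space M \<Longrightarrow> H x \<le> k" and k: "1 \<le> k"
  shows "(\<integral>\<^sup>+x. ennreal (p x * H x) * lpos (p x * H x) \<partial>M) < \<infinity>"
    and "(\<integral>\<^sup>+x. ennreal (p x * H x) * lneg (p x * H x) \<partial>M) < \<infinity>"
    and "(\<integral>\<^sup>+x. ennreal (p x * H x * \<bar>ln (p x * H x)\<bar>) \<partial>M) < \<infinity>"
proof -
  have pm[measurable]: "p \<in> borel_measurable M" and p0: "\<And>x. x \<in> space M \<Longrightarrow> 0 \<le> p x"
    and p1: "(\<integral>\<^sup>+x. ennreal (p x) \<partial>M) = 1" using p by (auto simp: dens_set_def)
  note E = ent_parts[OF p ent]
  have "(\<integral>\<^sup>+x. ennreal (p x * H x) * lpos (p x * H x) \<partial>M)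
      \<le> (\<integral>\<^sup>+x. ennreal (k * ln k) * ennreal (p x) + ennreal k * (ennreal (p x) * lpos (p x)) \<partial>M)"
    by (intro nn_integral_mono pf1 p0 H0 Hk k)
  also have "\<dots> = ennreal (k * ln k) * 1 + ennreal k * (\<integral>\<^sup>+x. ennreal (p x) * lpos (p x) \<partial>M)"
    by (simp add: nn_integral_add nn_integral_cmult p1)
  also have "\<dots> < \<infinity>" using E(1) by (simp add: ennreal_mult_less_top less_top)
  finally show A: "(\<integral>\<^sup>+x. ennreal (p x * H x) * lpos (p x * H x) \<partial>M) < \<infinity>" .
  have "(\<integral>\<^sup>+x. ennreal (p x * H x) * lneg (p x * H x) \<partial>M)
      \<le> (\<integral>\<^sup>+x. ennreal k * (ennreal (p x) * lneg (p x)) + ennreal (p x) \<partial>M)"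
    by (intro nn_integral_mono pf2 p0 H0 Hk k)
  also have "\<dots> = ennreal k * (\<integral>\<^sup>+x. ennreal (p x) * lneg (p x) \<partial>M) + 1"
    by (simp add: nn_integral_add nn_integral_cmult p1)
  also have "\<dots> < \<infinity>" using E(2) by (simp add: ennreal_mult_less_top less_top)
  finally show B: "(\<integral>\<^sup>+x. ennreal (p x * H x) * lneg (p x * H x) \<partial>M) < \<infinity>" .
  have "(\<integral>\<^sup>+x. ennreal (p x * H x * \<bar>ln (p x * H x)\<bar>) \<partial>M)
      = (\<integral>\<^sup>+x. ennreal (p x * H x) * lpos (p x * H x) + ennreal (p x * H x) * lneg (p x * H x) \<partial>M)"
    by (intro nn_integral_cong ent_split) (simp add: p0 H0)
  also have "\<dots> = (\<integral>\<^sup>+x. ennreal (p x * H x) * lpos (p x * H x) \<partial>M) + (\<integral>\<^sup>+x. ennreal (p x * H x) * lneg (p x * H x) \<partial>M)"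
    by (rule nn_integral_add) measurable
  also have "\<dots> < \<infinity>" using A B by (simp add: less_top)
  finally show "(\<integral>\<^sup>+x. ennreal (p x * H x * \<bar>ln (p x * H x)\<bar>) \<partial>M) < \<infinity>" .
qed



locale PLs =
  fixes M :: "'a measure" and N :: "'w measure" and r :: "'a \<Rightarrow> real"
    and \<epsilon> :: "'w \<Rightarrow> 'a \<Rightarrow> real" and K :: nat
  assumes r_meas: "r \<in> borel_measurable M"
    and N: "prob_space N"
    and eps_meas: "(\<lambda>(\<omega>, x). \<epsilon> \<omega> x) \<in> borel_measurable (N \<Otimes>\<^sub>M M)"
    and K2: "K \<ge> 2"
begin

declare r_meas[measurable] eps_meas[measurable]

lemma r_measP[measurable]: "r \<in> borel_measurable (density M p)"
  using r_meas by (simp cong: measurable_cong_sets)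

lemma eps_measP[measurable]: "(\<lambda>(\<omega>, x). \<epsilon> \<omega> x) \<in> borel_measurable (N \<Otimes>\<^sub>M density M p)"
  using eps_meas by (subst measurable_cong_sets[OF sets_pair_measure_cong[OF refl sets_density] refl])

lemma Nsf: "sigma_finite_measure N" using N by (rule prob_space_imp_sigma_finite)

lemma dens_prob:
  assumes "p \<in> dens_set M" shows "prob_space (density M (\<lambda>x. ennreal (p x)))"
proof (rule prob_spaceI)
  have pm: "p \<in> borel_measurable M" and p1: "(\<integral>\<^sup>+x. ennreal (p x) \<partial>M) = 1"
    using assms by (auto simp: dens_set_def)
  have "emeasure (density M (\<lambda>x. ennreal (p x))) (space M) = (\<integral>\<^sup>+x. ennreal (p x) * indicator (space M) x \<partial>M)"
    using pm by (intro emeasure_density) auto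
  also have "\<dots> = (\<integral>\<^sup>+x. ennreal (p x) \<partial>M)" by (intro nn_integral_cong) (simp add: indicator_def)
  finally show "emeasure (density M (\<lambda>x. ennreal (p x))) (space (density M (\<lambda>x. ennreal (p x)))) = 1"
    using p1 by simp
qed

definition wt :: "nat \<Rightarrow> (nat \<Rightarrow> 'a) \<Rightarrow> (nat \<Rightarrow> 'w) \<Rightarrow> real" where
  "wt k xs es = exp (r (xs k) + \<epsilon> (es k) (xs k)) / (\<Sum>i<K. exp (r (xs i) + \<epsilon> (es i) (xs i)))"

lemma K0: "0 < K" using K2 by simp

lemma wt_pos: "0 < wt k xs es"
  unfolding wt_def using K0 by (intro divide_pos_pos sum_pos) auto

lemma wt_sum: "(\<Sum>k<K. wt k xs es) = 1"
proof -
  have "0 < (\<Sum>i<K. exp (r (xs i) + \<epsilon> (es i) (xs i)))" using K0 by (intro sum_pos) auto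
  then show ?thesis unfolding wt_def by (simp add: sum_divide_distrib[symmetric])
qed

lemma sym_gen:
  fixes P :: "'a measure" and \<sigma> :: "nat \<Rightarrow> nat"
  assumes Pp: "prob_space P" and \<sigma>: "bij_betw \<sigma> {..<K} {..<K}"
   and G[measurable]: "G \<in> borel_measurable (PiM {..<K} (\<lambda>_. P) \<Otimes>\<^sub>M PiM {..<K} (\<lambda>_. N))"
  shows "(\<integral>\<^sup>+z. G z \<partial>(PiM {..<K} (\<lambda>_. P) \<Otimes>\<^sub>M PiM {..<K} (\<lambda>_. N)))
     = (\<integral>\<^sup>+z. G ((\<lambda>n\<in>{..<K}. fst z (\<sigma> n)), (\<lambda>n\<in>{..<K}. snd z (\<sigma> n))) \<partial>(PiM {..<K} (\<lambda>_. P) \<Otimes>\<^sub>M PiM {..<K} (\<lambda>_. N)))"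
proof -
  let ?I = "{..<K}"
  let ?PK = "PiM ?I (\<lambda>_. P)" and ?NK = "PiM ?I (\<lambda>_. N)"
  let ?T1 = "\<lambda>\<omega>. \<lambda>n\<in>?I. \<omega> (\<sigma> n)"
  let ?T2 = "\<lambda>\<omega>. \<lambda>n\<in>?I. \<omega> (\<sigma> n)"
  have inj: "inj_on \<sigma> ?I" and img: "\<sigma> \<in> ?I \<rightarrow> ?I" using \<sigma> by (auto simp: bij_betw_def)
  have T1m: "?T1 \<in> ?PK \<rightarrow>\<^sub>M ?PK" using img
    by (intro measurable_restrict measurable_component_singleton) auto
  have T2m: "?T2 \<in> ?NK \<rightarrow>\<^sub>M ?NK" using img
    by (intro measurable_restrict measurable_component_singleton) auto
  have D1: "distr ?PK ?PK ?T1 = ?PK"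
    using distr_PiM_reindex[of ?I "\<lambda>_. P" \<sigma> ?I] Pp inj img by simp
  have D2: "distr ?NK ?NK ?T2 = ?NK"
    using distr_PiM_reindex[of ?I "\<lambda>_. N" \<sigma> ?I] N inj img by simp
  have sfN: "sigma_finite_measure (distr ?NK ?NK ?T2)" unfolding D2
    by (rule prob_space_imp_sigma_finite, rule prob_space_PiM, rule N)
  have eq: "?PK \<Otimes>\<^sub>M ?NK = distr (?PK \<Otimes>\<^sub>M ?NK) (?PK \<Otimes>\<^sub>M ?NK) (\<lambda>(x, y). (?T1 x, ?T2 y))"
    using pair_measure_distr[OF T1m T2m sfN] unfolding D1 D2 .
  have Tm: "(\<lambda>(x, y). (?T1 x, ?T2 y)) \<in> (?PK \<Otimes>\<^sub>M ?NK) \<rightarrow>\<^sub>M (?PK \<Otimes>\<^sub>M ?NK)"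
    unfolding split_beta'
    by (rule measurable_Pair[OF measurable_compose[OF measurable_fst T1m] measurable_compose[OF measurable_snd T2m]])
  have "integral\<^sup>N (?PK \<Otimes>\<^sub>M ?NK) G = integral\<^sup>N (distr (?PK \<Otimes>\<^sub>M ?NK) (?PK \<Otimes>\<^sub>M ?NK) (\<lambda>(x, y). (?T1 x, ?T2 y))) G"
    using eq by (rule arg_cong)
  also have "\<dots> = (\<integral>\<^sup>+z. G ((\<lambda>(x, y). (?T1 x, ?T2 y)) z) \<partial>(?PK \<Otimes>\<^sub>M ?NK))"
    by (rule nn_integral_distr[OF Tm]) simp
  finally show ?thesis by (simp add: split_beta')
qed


lemma peel:
  assumes p: "p \<in> dens_set M" and Km: "K = Suc m"
    and F[measurable]: "F \<in> borel_measurable M"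
  shows "(\<integral>\<^sup>+z. ennreal (wt m (fst z) (snd z)) * F (fst z m)
            \<partial>(PiM {..<K} (\<lambda>_. density M (\<lambda>x. ennreal (p x))) \<Otimes>\<^sub>M PiM {..<K} (\<lambda>_. N)))
     = (\<integral>\<^sup>+x. (\<integral>\<^sup>+\<omega>. ennreal ((\<lambda>(\<omega>, es, xs). exp (r x + \<epsilon> \<omega> x)
            / (exp (r x + \<epsilon> \<omega> x) + (\<Sum>k<m. exp (r (xs k) + \<epsilon> (es k) (xs k))))) \<omega>)
          \<partial>(N \<Otimes>\<^sub>M (PiM {..<m} (\<lambda>_. N) \<Otimes>\<^sub>M PiM {..<m} (\<lambda>_. density M (\<lambda>y. ennreal (p y)))))) * F x
        \<partial>density M (\<lambda>x. ennreal (p x)))"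
proof -
  let ?P = "density M (\<lambda>x. ennreal (p x))"
  have Pp: "prob_space ?P" by (rule dens_prob[OF p])
  define g where "g x = (\<lambda>(\<omega>, es, xs). exp (r x + \<epsilon> \<omega> x)
            / (exp (r x + \<epsilon> \<omega> x) + (\<Sum>k<m. exp (r (xs k) + \<epsilon> (es k) (xs k)))))" for x
  let ?PK = "PiM {..<K} (\<lambda>_. ?P)" and ?NK = "PiM {..<K} (\<lambda>_. N)"
  let ?PJ = "PiM {..<m} (\<lambda>_. ?P)" and ?NJ = "PiM {..<m} (\<lambda>_. N)"
  interpret PP: product_sigma_finite "\<lambda>_. ?P" by (simp add: product_sigma_finite_def prob_space_imp_sigma_finite[OF Pp])
  interpret NN: product_sigma_finite "\<lambda>_. N" by (simp add: product_sigma_finite_def Nsf)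
  have PKp: "prob_space ?PK" using Pp by (intro prob_space_PiM)
  have NKp: "prob_space ?NK" using N by (intro prob_space_PiM)
  have PJp: "prob_space ?PJ" using Pp by (intro prob_space_PiM)
  have NJp: "prob_space ?NJ" using N by (intro prob_space_PiM)
  interpret NKs: sigma_finite_measure ?NK by (rule prob_space_imp_sigma_finite[OF NKp])
  interpret Q1: pair_sigma_finite N "?NJ \<Otimes>\<^sub>M ?PJ"
    by (intro pair_sigma_finite.intro Nsf prob_space_imp_sigma_finite prob_space_pair NJp PJp)
  interpret Q2: pair_sigma_finite ?NJ ?PJ
    by (intro pair_sigma_finite.intro prob_space_imp_sigma_finite NJp PJp)
  have IK: "{..<K} = insert m {..<m}" using Km by auto
  define h where "h z = ennreal (wt m (fst z) (snd z)) * F (fst z m)" for z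
  have hm[measurable]: "h \<in> borel_measurable (?PK \<Otimes>\<^sub>M ?NK)" unfolding h_def wt_def unfolding Km by measurable
  define \<Phi> where "\<Phi> xs = (\<integral>\<^sup>+es. h (xs, es) \<partial>?NK)" for xs
  have \<Phi>m: "\<Phi> \<in> borel_measurable ?PK" unfolding \<Phi>_def by (rule NKs.borel_measurable_nn_integral_fst[OF hm])
  have s1: "integral\<^sup>N (?PK \<Otimes>\<^sub>M ?NK) h = (\<integral>\<^sup>+xs. \<Phi> xs \<partial>?PK)"
    unfolding \<Phi>_def by (rule NKs.nn_integral_fst[OF hm, symmetric])
  have s2: "(\<integral>\<^sup>+xs. \<Phi> xs \<partial>?PK) = (\<integral>\<^sup>+x. (\<integral>\<^sup>+xs'. \<Phi> (xs'(m := x)) \<partial>?PJ) \<partial>?P)"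
  proof -
    have \<Phi>m': "\<Phi> \<in> borel_measurable (PiM (insert m {..<m}) (\<lambda>_. ?P))" using \<Phi>m unfolding IK .
    have "integral\<^sup>N (PiM (insert m {..<m}) (\<lambda>_. ?P)) \<Phi> = (\<integral>\<^sup>+x. (\<integral>\<^sup>+xs'. \<Phi> (xs'(m := x)) \<partial>?PJ) \<partial>?P)"
      by (rule PP.product_nn_integral_insert_rev[OF _ _ \<Phi>m']) auto
    then show ?thesis unfolding IK .
  qed
  have s3: "\<Phi> (xs'(m := x)) = (\<integral>\<^sup>+es'. (\<integral>\<^sup>+e. ennreal (g x (e, es', xs')) * F x \<partial>N) \<partial>?NJ)"
    if x: "x \<in> space ?P" and xs': "xs' \<in> space ?PJ" for x xs'
  proof -
    have sp': "xs'(m := x) \<in> space (PiM (insert m {..<m}) (\<lambda>_. ?P))"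
      by (rule measurable_space[OF measurable_component_update[OF xs'] x]) simp
    have sp: "xs'(m := x) \<in> space ?PK" using sp' unfolding IK .
    have hm2: "(\<lambda>es. h (xs'(m := x), es)) \<in> borel_measurable (PiM (insert m {..<m}) (\<lambda>_. N))"
      using measurable_compose_Pair1[OF sp hm] unfolding IK .
    have "\<Phi> (xs'(m := x)) = (\<integral>\<^sup>+es'. (\<integral>\<^sup>+e. h (xs'(m := x), es'(m := e)) \<partial>N) \<partial>?NJ)"
      unfolding \<Phi>_def IK by (rule NN.product_nn_integral_insert[OF _ _ hm2]) auto
    also have "\<dots> = (\<integral>\<^sup>+es'. (\<integral>\<^sup>+e. ennreal (g x (e, es', xs')) * F x \<partial>N) \<partial>?NJ)"
    proof (intro nn_integral_cong)
      fix es' e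
      have s: "(\<Sum>i<m. exp (r ((xs'(m := x)) i) + \<epsilon> ((es'(m := e)) i) ((xs'(m := x)) i)))
          = (\<Sum>i<m. exp (r (xs' i) + \<epsilon> (es' i) (xs' i)))" by (intro sum.cong) auto
      show "h (xs'(m := x), es'(m := e)) = ennreal (g x (e, es', xs')) * F x"
        unfolding h_def g_def wt_def unfolding Km using s by (simp add: add.commute)
    qed
    finally show ?thesis .
  qed
  have r3: "(\<integral>\<^sup>+\<omega>. ennreal (g x \<omega>) \<partial>(N \<Otimes>\<^sub>M (?NJ \<Otimes>\<^sub>M ?PJ))) * F x
      = (\<integral>\<^sup>+xs'. (\<integral>\<^sup>+es'. (\<integral>\<^sup>+e. ennreal (g x (e, es', xs')) * F x \<partial>N) \<partial>?NJ) \<partial>?PJ)"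
    if x: "x \<in> space ?P" for x
  proof -
    have gm[measurable]: "(\<lambda>\<omega>. ennreal (g x \<omega>) * F x) \<in> borel_measurable (N \<Otimes>\<^sub>M (?NJ \<Otimes>\<^sub>M ?PJ))"
      unfolding g_def using x by measurable
    have gm2: "(\<lambda>\<omega>. ennreal (g x \<omega>)) \<in> borel_measurable (N \<Otimes>\<^sub>M (?NJ \<Otimes>\<^sub>M ?PJ))"
      unfolding g_def using x by measurable
    have gm3: "(\<lambda>y. \<integral>\<^sup>+e. ennreal (g x (e, y)) * F x \<partial>N) \<in> borel_measurable (?NJ \<Otimes>\<^sub>M ?PJ)"
    proof -
      have fm: "(\<lambda>(y, e). ennreal (exp (r x + \<epsilon> e x) / (exp (r x + \<epsilon> e x) + (\<Sum>k<m. exp (r (snd y k) + \<epsilon> (fst y k) (snd y k))))) * F x)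
          \<in> borel_measurable ((?NJ \<Otimes>\<^sub>M ?PJ) \<Otimes>\<^sub>M N)" using x by measurable
      have "(\<lambda>y. \<integral>\<^sup>+e. (\<lambda>(y, e). ennreal (exp (r x + \<epsilon> e x) / (exp (r x + \<epsilon> e x) + (\<Sum>k<m. exp (r (snd y k) + \<epsilon> (fst y k) (snd y k))))) * F x) (y, e) \<partial>N)
          \<in> borel_measurable (?NJ \<Otimes>\<^sub>M ?PJ)"
        by (rule sigma_finite_measure.borel_measurable_nn_integral_fst[OF Nsf fm])
      then show ?thesis by (simp add: g_def split_beta split_beta')
    qed
    have "(\<integral>\<^sup>+\<omega>. ennreal (g x \<omega>) \<partial>(N \<Otimes>\<^sub>M (?NJ \<Otimes>\<^sub>M ?PJ))) * F x
        = (\<integral>\<^sup>+\<omega>. ennreal (g x \<omega>) * F x \<partial>(N \<Otimes>\<^sub>M (?NJ \<Otimes>\<^sub>M ?PJ)))"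
      by (rule nn_integral_multc[OF gm2, symmetric])
    also have "\<dots> = (\<integral>\<^sup>+y. (\<integral>\<^sup>+e. ennreal (g x (e, y)) * F x \<partial>N) \<partial>(?NJ \<Otimes>\<^sub>M ?PJ))"
      by (rule Q1.nn_integral_snd[symmetric]) (rule gm)
    also have "\<dots> = (\<integral>\<^sup>+xs'. (\<integral>\<^sup>+es'. (\<integral>\<^sup>+e. ennreal (g x (e, es', xs')) * F x \<partial>N) \<partial>?NJ) \<partial>?PJ)"
      using Q2.nn_integral_snd[OF gm3] by simp
    finally show ?thesis .
  qed
  have "integral\<^sup>N (?PK \<Otimes>\<^sub>M ?NK) h = (\<integral>\<^sup>+x. (\<integral>\<^sup>+\<omega>. ennreal (g x \<omega>) \<partial>(N \<Otimes>\<^sub>M (?NJ \<Otimes>\<^sub>M ?PJ))) * F x \<partial>?P)"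
    unfolding s1 s2
  proof (intro nn_integral_cong)
    fix x assume x: "x \<in> space ?P"
    have "(\<integral>\<^sup>+xs'. \<Phi> (xs'(m := x)) \<partial>?PJ) = (\<integral>\<^sup>+xs'. (\<integral>\<^sup>+es'. (\<integral>\<^sup>+e. ennreal (g x (e, es', xs')) * F x \<partial>N) \<partial>?NJ) \<partial>?PJ)"
      by (intro nn_integral_cong) (rule s3[OF x])
    then show "(\<integral>\<^sup>+xs'. \<Phi> (xs'(m := x)) \<partial>?PJ) = (\<integral>\<^sup>+\<omega>. ennreal (g x \<omega>) \<partial>(N \<Otimes>\<^sub>M (?NJ \<Otimes>\<^sub>M ?PJ))) * F x"
      using r3[OF x] by simp
  qed
  then show ?thesis unfolding h_def g_def .
qed


lemma kernel:
  assumes p: "p \<in> dens_set M" and Km: "K = Suc m"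
  shows ker_meas: "choice_kernel M N r \<epsilon> K p \<in> borel_measurable M"
    and ker_nonneg: "0 \<le> choice_kernel M N r \<epsilon> K p x"
    and ker_le: "x \<in> space M \<Longrightarrow> choice_kernel M N r \<epsilon> K p x \<le> real K"
    and ker_nn: "x \<in> space M \<Longrightarrow> ennreal (choice_kernel M N r \<epsilon> K p x) = of_nat K *
       (\<integral>\<^sup>+\<omega>. ennreal ((\<lambda>(\<omega>, es, xs). exp (r x + \<epsilon> \<omega> x)
            / (exp (r x + \<epsilon> \<omega> x) + (\<Sum>k<m. exp (r (xs k) + \<epsilon> (es k) (xs k))))) \<omega>)
          \<partial>(N \<Otimes>\<^sub>M (PiM {..<m} (\<lambda>_. N) \<Otimes>\<^sub>M PiM {..<m} (\<lambda>_. density M (\<lambda>y. ennreal (p y))))))"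
proof -
  let ?P = "density M (\<lambda>x. ennreal (p x))"
  let ?Q = "N \<Otimes>\<^sub>M (PiM {..<m} (\<lambda>_. N) \<Otimes>\<^sub>M PiM {..<m} (\<lambda>_. ?P))"
  have Pp: "prob_space ?P" by (rule dens_prob[OF p])
  have Qp: "prob_space ?Q"
    by (intro prob_space_pair N prob_space_PiM Pp)
  interpret Q: prob_space ?Q by (rule Qp)
  have Km1: "K - 1 = m" using Km by simp
  define g where "g x = (\<lambda>(\<omega>, es, xs). exp (r x + \<epsilon> \<omega> x)
            / (exp (r x + \<epsilon> \<omega> x) + (\<Sum>k<m. exp (r (xs k) + \<epsilon> (es k) (xs k)))))" for x
  have CK: "choice_kernel M N r \<epsilon> K p x = (\<integral>\<omega>. real K * g x \<omega> \<partial>?Q)" for x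
    unfolding choice_kernel_def Km1 g_def
    by (intro arg_cong[where f="integral\<^sup>L ?Q"]) (auto simp: fun_eq_iff)
  have g0: "0 \<le> g x \<omega>" for x \<omega> unfolding g_def
    by (auto simp: split_beta intro!: divide_nonneg_pos add_pos_nonneg sum_nonneg)
  have g1: "g x \<omega> \<le> 1" for x \<omega> unfolding g_def
    by (auto simp: split_beta intro!: divide_le_eq_1_pos[THEN iffD2] add_pos_nonneg sum_nonneg)
  have jm: "(\<lambda>(x, \<omega>). real K * g x \<omega>) \<in> borel_measurable (?P \<Otimes>\<^sub>M ?Q)"
    unfolding g_def by measurable
  have "(\<lambda>x. \<integral>\<omega>. real K * g x \<omega> \<partial>?Q) \<in> borel_measurable ?P"
    by (rule sigma_finite_measure.borel_measurable_lebesgue_integral[OF prob_space_imp_sigma_finite[OF Qp] jm])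
  then show "choice_kernel M N r \<epsilon> K p \<in> borel_measurable M"
    unfolding CK[abs_def] by (simp cong: measurable_cong_sets)
  show "0 \<le> choice_kernel M N r \<epsilon> K p x" unfolding CK using g0
    by (intro Bochner_Integration.integral_nonneg) (simp add: g0)
  assume x: "x \<in> space M"
  have gm[measurable]: "g x \<in> borel_measurable ?Q" unfolding g_def using x by measurable
  have int: "integrable ?Q (g x)"
    by (rule Q.integrable_const_bound[where B=1]) (use g0 g1 in auto)
  show "choice_kernel M N r \<epsilon> K p x \<le> real K"
  proof -
    have "(\<integral>\<omega>. real K * g x \<omega> \<partial>?Q) \<le> (\<integral>\<omega>. real K \<partial>?Q)"
      using int g1 by (intro integral_mono) (auto intro: mult_left_le)
    then show ?thesis unfolding CK using Q.prob_space by simp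
  qed
  have "ennreal (choice_kernel M N r \<epsilon> K p x) = ennreal (real K * (\<integral>\<omega>. g x \<omega> \<partial>?Q))"
    unfolding CK by simp
  also have "\<dots> = of_nat K * ennreal (\<integral>\<omega>. g x \<omega> \<partial>?Q)"
    by (subst ennreal_mult') (auto simp: ennreal_of_nat_eq_real_of_nat)
  also have "ennreal (\<integral>\<omega>. g x \<omega> \<partial>?Q) = (\<integral>\<^sup>+\<omega>. ennreal (g x \<omega>) \<partial>?Q)"
    by (rule nn_integral_eq_integral[OF int, symmetric]) (use g0 in auto)
  finally show "ennreal (choice_kernel M N r \<epsilon> K p x) = of_nat K * (\<integral>\<^sup>+\<omega>. ennreal (g x \<omega>) \<partial>?Q)" .
qed


lemma L2:
  assumes p: "p \<in> dens_set M" and F[measurable]: "F \<in> borel_measurable M"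
  shows "(\<integral>\<^sup>+z. (\<Sum>k<K. ennreal (wt k (fst z) (snd z)) * F (fst z k))
            \<partial>(PiM {..<K} (\<lambda>_. density M (\<lambda>x. ennreal (p x))) \<Otimes>\<^sub>M PiM {..<K} (\<lambda>_. N)))
     = (\<integral>\<^sup>+x. ennreal (choice_kernel M N r \<epsilon> K p x) * F x \<partial>density M (\<lambda>x. ennreal (p x)))"
proof -
  obtain m where Km: "K = Suc m" using K2 by (cases K) auto
  let ?P = "density M (\<lambda>x. ennreal (p x))"
  let ?\<Omega> = "PiM {..<K} (\<lambda>_. ?P) \<Otimes>\<^sub>M PiM {..<K} (\<lambda>_. N)"
  let ?Q = "N \<Otimes>\<^sub>M (PiM {..<m} (\<lambda>_. N) \<Otimes>\<^sub>M PiM {..<m} (\<lambda>_. ?P))"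
  have Pp: "prob_space ?P" by (rule dens_prob[OF p])
  have Qp: "prob_space ?Q" by (intro prob_space_pair N prob_space_PiM Pp)
  have mK: "m < K" using Km by simp
  define h where "h k z = ennreal (wt k (fst z) (snd z)) * F (fst z k)" for k z
  have hm: "h k \<in> borel_measurable ?\<Omega>" if k: "k < K" for k
  proof -
    have k': "k \<in> {..<K}" using k by simp
    show ?thesis unfolding h_def wt_def using k' by measurable
  qed
  have sym: "integral\<^sup>N ?\<Omega> (h k) = integral\<^sup>N ?\<Omega> (h m)" if k: "k < K" for k
  proof -
    define \<sigma> where "\<sigma> i = (if i = k then m else if i = m then k else i)" for i
    have bij: "bij_betw \<sigma> {..<K} {..<K}"
      by (rule bij_betwI[where g=\<sigma>]) (auto simp: \<sigma>_def mK k)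
    have "integral\<^sup>N ?\<Omega> (h k) = (\<integral>\<^sup>+z. h k ((\<lambda>n\<in>{..<K}. fst z (\<sigma> n)), (\<lambda>n\<in>{..<K}. snd z (\<sigma> n))) \<partial>?\<Omega>)"
      by (rule sym_gen[OF Pp bij hm[OF k]])
    also have "\<dots> = integral\<^sup>N ?\<Omega> (h m)"
    proof (intro nn_integral_cong)
      fix z :: "(nat \<Rightarrow> 'a) \<times> (nat \<Rightarrow> 'w)"
      have "(\<Sum>i<K. exp (r ((\<lambda>n\<in>{..<K}. fst z (\<sigma> n)) i) + \<epsilon> ((\<lambda>n\<in>{..<K}. snd z (\<sigma> n)) i) ((\<lambda>n\<in>{..<K}. fst z (\<sigma> n)) i)))
          = (\<Sum>i<K. (\<lambda>j. exp (r (fst z j) + \<epsilon> (snd z j) (fst z j))) (\<sigma> i))" by (intro sum.cong) auto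
      also have "\<dots> = (\<Sum>i<K. exp (r (fst z i) + \<epsilon> (snd z i) (fst z i)))"
        by (rule sum.reindex_bij_betw[OF bij])
      finally have s: "(\<Sum>i<K. exp (r ((\<lambda>n\<in>{..<K}. fst z (\<sigma> n)) i) + \<epsilon> ((\<lambda>n\<in>{..<K}. snd z (\<sigma> n)) i) ((\<lambda>n\<in>{..<K}. fst z (\<sigma> n)) i)))
          = (\<Sum>i<K. exp (r (fst z i) + \<epsilon> (snd z i) (fst z i)))" .
      show "h k ((\<lambda>n\<in>{..<K}. fst z (\<sigma> n)), (\<lambda>n\<in>{..<K}. snd z (\<sigma> n))) = h m z"
        unfolding h_def wt_def using s k by (simp add: \<sigma>_def)
    qed
    finally show ?thesis .
  qed
  define G0 where "G0 x = (\<integral>\<^sup>+\<omega>. ennreal ((\<lambda>(\<omega>, es, xs). exp (r x + \<epsilon> \<omega> x)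
            / (exp (r x + \<epsilon> \<omega> x) + (\<Sum>k<m. exp (r (xs k) + \<epsilon> (es k) (xs k))))) \<omega>) \<partial>?Q)" for x
  have G0m: "G0 \<in> borel_measurable ?P"
  proof -
    have "(\<lambda>x. \<integral>\<^sup>+\<omega>. ennreal ((\<lambda>(\<omega>, es, xs). exp (r x + \<epsilon> \<omega> x)
            / (exp (r x + \<epsilon> \<omega> x) + (\<Sum>k<m. exp (r (xs k) + \<epsilon> (es k) (xs k))))) \<omega>) \<partial>?Q) \<in> borel_measurable ?P"
      by (rule sigma_finite_measure.borel_measurable_nn_integral[OF prob_space_imp_sigma_finite[OF Qp]]) measurable
    then show ?thesis unfolding G0_def[abs_def] .
  qed
  have eqm: "integral\<^sup>N ?\<Omega> (h m) = (\<integral>\<^sup>+x. G0 x * F x \<partial>?P)"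
    using peel[OF p Km F] by (simp only: h_def[abs_def] G0_def)
  have kn: "ennreal (choice_kernel M N r \<epsilon> K p x) = of_nat K * G0 x" if x: "x \<in> space M" for x
    using ker_nn[OF p Km x] by (simp only: G0_def)
  have "(\<integral>\<^sup>+z. (\<Sum>k<K. h k z) \<partial>?\<Omega>) = (\<Sum>k<K. integral\<^sup>N ?\<Omega> (h k))"
    by (rule nn_integral_sum) (simp add: hm)
  also have "\<dots> = (\<Sum>k<K. integral\<^sup>N ?\<Omega> (h m))" by (intro sum.cong) (auto simp: sym)
  also have "\<dots> = of_nat K * (\<integral>\<^sup>+x. G0 x * F x \<partial>?P)" by (simp add: eqm)
  also have "\<dots> = (\<integral>\<^sup>+x. of_nat K * (G0 x * F x) \<partial>?P)"
    by (rule nn_integral_cmult[symmetric]) (use G0m in measurable)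
  also have "\<dots> = (\<integral>\<^sup>+x. ennreal (choice_kernel M N r \<epsilon> K p x) * F x \<partial>?P)"
    by (intro nn_integral_cong) (simp add: kn mult.assoc)
  finally show ?thesis unfolding h_def .
qed

lemma PL_eq:
  assumes p: "p \<in> dens_set M" and q[measurable]: "q \<in> borel_measurable M"
    and fin: "(\<integral>\<^sup>+x. ennreal (p x * choice_kernel M N r \<epsilon> K p x) * lpos (q x) \<partial>M) < top"
  shows "PL_obj M N r \<epsilon> K p q =
     enn2ereal (\<integral>\<^sup>+x. ennreal (p x * choice_kernel M N r \<epsilon> K p x) * lpos (q x) \<partial>M)
   - enn2ereal (\<integral>\<^sup>+x. ennreal (p x * choice_kernel M N r \<epsilon> K p x) * lneg (q x) \<partial>M)"
proof -
  obtain m where Km: "K = Suc m" using K2 by (cases K) auto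
  let ?P = "density M (\<lambda>x. ennreal (p x))"
  let ?\<Omega> = "PiM {..<K} (\<lambda>_. ?P) \<Otimes>\<^sub>M PiM {..<K} (\<lambda>_. N)"
  let ?H = "choice_kernel M N r \<epsilon> K p"
  have pm[measurable]: "p \<in> borel_measurable M" and p0: "\<And>x. x \<in> space M \<Longrightarrow> 0 \<le> p x"
    using p by (auto simp: dens_set_def)
  have Hm[measurable]: "?H \<in> borel_measurable M" by (rule ker_meas[OF p Km])
  have H0: "0 \<le> ?H x" for x by (rule ker_nonneg[OF p Km])
  define S where "S z = (\<Sum>k<K. ereal (wt k (fst z) (snd z)) * elog (q (fst z k)))" for z
  define a where "a z = (\<Sum>k<K. ennreal (wt k (fst z) (snd z)) * lpos (q (fst z k)))" for z
  define b where "b z = (\<Sum>k<K. ennreal (wt k (fst z) (snd z)) * lneg (q (fst z k)))" for z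
  have Sm[measurable]: "S \<in> borel_measurable ?\<Omega>" unfolding S_def wt_def by measurable
  have am[measurable]: "a \<in> borel_measurable ?\<Omega>" unfolding a_def wt_def by measurable
  have bm[measurable]: "b \<in> borel_measurable ?\<Omega>" unfolding b_def wt_def by measurable
  have dens_eq: "(\<integral>\<^sup>+x. ennreal (?H x) * G (q x) \<partial>?P) = (\<integral>\<^sup>+x. ennreal (p x * ?H x) * G (q x) \<partial>M)"
    if G[measurable]: "G \<in> borel_measurable borel" for G
    by (subst nn_integral_density) (auto intro!: nn_integral_cong simp: p0 H0 ennreal_mult mult.assoc)
  have Ia: "integral\<^sup>N ?\<Omega> a = (\<integral>\<^sup>+x. ennreal (p x * ?H x) * lpos (q x) \<partial>M)"
  proof -
    have m: "(\<lambda>x. lpos (q x)) \<in> borel_measurable M" by measurable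
    show ?thesis unfolding a_def using L2[OF p m] dens_eq[OF lpos_meas] by simp
  qed
  have Ib: "integral\<^sup>N ?\<Omega> b = (\<integral>\<^sup>+x. ennreal (p x * ?H x) * lneg (q x) \<partial>M)"
  proof -
    have m: "(\<lambda>x. lneg (q x)) \<in> borel_measurable M" by measurable
    show ?thesis unfolding b_def using L2[OF p m] dens_eq[OF lneg_meas] by simp
  qed
  have pw1: "e2ennreal (S z) + b z = a z + e2ennreal (- S z)" for z
    unfolding S_def a_def b_def by (rule pl_pw(1)) (rule wt_pos)
  have pw2: "e2ennreal (S z) \<le> a z" for z
    unfolding S_def a_def by (rule pl_pw(2)) (rule wt_pos)
  have "(\<integral>\<^sup>+z. e2ennreal (S z) \<partial>?\<Omega>) + integral\<^sup>N ?\<Omega> b = (\<integral>\<^sup>+z. e2ennreal (S z) + b z \<partial>?\<Omega>)"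
    by (rule nn_integral_add[symmetric]) measurable
  also have "\<dots> = (\<integral>\<^sup>+z. a z + e2ennreal (- S z) \<partial>?\<Omega>)" by (simp add: pw1)
  also have "\<dots> = integral\<^sup>N ?\<Omega> a + (\<integral>\<^sup>+z. e2ennreal (- S z) \<partial>?\<Omega>)"
    by (rule nn_integral_add) measurable
  finally have eq: "(\<integral>\<^sup>+z. e2ennreal (S z) \<partial>?\<Omega>) + integral\<^sup>N ?\<Omega> b = integral\<^sup>N ?\<Omega> a + (\<integral>\<^sup>+z. e2ennreal (- S z) \<partial>?\<Omega>)" .
  have le: "(\<integral>\<^sup>+z. e2ennreal (S z) \<partial>?\<Omega>) \<le> integral\<^sup>N ?\<Omega> a"
    by (intro nn_integral_mono pw2)
  have aux: "enn2ereal (\<integral>\<^sup>+z. e2ennreal (S z) \<partial>?\<Omega>) - enn2ereal (\<integral>\<^sup>+z. e2ennreal (- S z) \<partial>?\<Omega>)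
      = enn2ereal (integral\<^sup>N ?\<Omega> a) - enn2ereal (integral\<^sup>N ?\<Omega> b)"
    by (rule ereal_aux3[OF eq le]) (use fin Ia in simp)
  have PL: "PL_obj M N r \<epsilon> K p q = enn2ereal (\<integral>\<^sup>+z. e2ennreal (S z) \<partial>?\<Omega>) - enn2ereal (\<integral>\<^sup>+z. e2ennreal (- S z) \<partial>?\<Omega>)"
    unfolding PL_obj_def eexp_def S_def wt_def by (simp add: split_beta')
  show ?thesis unfolding PL aux Ia Ib ..
qed


lemma step:
  assumes p: "p \<in> dens_set M" and ent: "(\<integral>\<^sup>+x. ennreal (p x * \<bar>ln (p x)\<bar>) \<partial>M) < \<infinity>"
  shows step_obj: "\<forall>q\<in>dens_set M. PL_obj M N r \<epsilon> K p q =
              eexp (density M (\<lambda>x. ennreal (p x)))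
                (\<lambda>x. elog (q x) * ereal (choice_kernel M N r \<epsilon> K p x))"
    and step_max: "is_PL_maximizer M N r \<epsilon> K p (\<lambda>x. p x * choice_kernel M N r \<epsilon> K p x)"
    and step_char: "\<forall>q. is_PL_maximizer M N r \<epsilon> K p q \<longleftrightarrow>
               q \<in> dens_set M \<and> (AE x in M. q x = p x * choice_kernel M N r \<epsilon> K p x)"
    and step_dens: "(\<lambda>x. p x * choice_kernel M N r \<epsilon> K p x) \<in> dens_set M"
    and step_ent: "(\<integral>\<^sup>+x. ennreal (p x * choice_kernel M N r \<epsilon> K p x * \<bar>ln (p x * choice_kernel M N r \<epsilon> K p x)\<bar>) \<partial>M) < \<infinity>"
proof -
  obtain m where Km: "K = Suc m" using K2 by (cases K) auto
  let ?P = "density M (\<lambda>x. ennreal (p x))"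
  let ?\<Omega> = "PiM {..<K} (\<lambda>_. ?P) \<Otimes>\<^sub>M PiM {..<K} (\<lambda>_. N)"
  define H where "H = choice_kernel M N r \<epsilon> K p"
  define f where "f x = p x * H x" for x
  have pm[measurable]: "p \<in> borel_measurable M" and p0: "\<And>x. x \<in> space M \<Longrightarrow> 0 \<le> p x"
    using p by (auto simp: dens_set_def)
  have Hm[measurable]: "H \<in> borel_measurable M" unfolding H_def by (rule ker_meas[OF p Km])
  have H0: "0 \<le> H x" for x unfolding H_def by (rule ker_nonneg[OF p Km])
  have HK: "H x \<le> real K" if "x \<in> space M" for x unfolding H_def by (rule ker_le[OF p Km that])
  have K1: "1 \<le> real K" using K2 by simp
  have Pp: "prob_space ?P" by (rule dens_prob[OF p])
  have \<Omega>p: "prob_space ?\<Omega>" by (intro prob_space_pair N prob_space_PiM Pp)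
  have f1: "(\<integral>\<^sup>+x. ennreal (f x) \<partial>M) = 1"
  proof -
    have c1: "(\<lambda>x. 1::ennreal) \<in> borel_measurable M" by simp
    have "(\<integral>\<^sup>+z. (\<Sum>k<K. ennreal (wt k (fst z) (snd z)) * 1) \<partial>?\<Omega>) = (\<integral>\<^sup>+z. 1 \<partial>?\<Omega>)"
    proof (intro nn_integral_cong)
      fix z
      have "(\<Sum>k<K. ennreal (wt k (fst z) (snd z)) * 1) = ennreal (\<Sum>k<K. wt k (fst z) (snd z))"
        using wt_pos by (simp add: less_imp_le)
      then show "(\<Sum>k<K. ennreal (wt k (fst z) (snd z)) * 1) = 1" by (simp add: wt_sum)
    qed
    also have "\<dots> = 1" using prob_space.emeasure_space_1[OF \<Omega>p] by simp
    finally have "(\<integral>\<^sup>+x. ennreal (H x) * 1 \<partial>?P) = 1" using L2[OF p c1] unfolding H_def by simp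
    then show ?thesis unfolding f_def
      by (subst (asm) nn_integral_density) (auto intro!: nn_integral_cong simp: ennreal_mult p0 H0 cong: nn_integral_cong)
  qed
  have fdens: "f \<in> dens_set M" using f1 p0 H0 unfolding dens_set_def f_def by auto
  note FE = ent_f[OF p ent Hm _ HK K1, OF H0]
  have fp: "(\<integral>\<^sup>+x. ennreal (f x) * lpos (f x) \<partial>M) < top" using FE(1) unfolding f_def by simp
  have fm: "(\<integral>\<^sup>+x. ennreal (f x) * lneg (f x) \<partial>M) < top" using FE(2) unfolding f_def by simp
  have obj: "eexp ?P (\<lambda>x. elog (q x) * ereal (H x)) =
      enn2ereal (\<integral>\<^sup>+x. ennreal (f x) * lpos (q x) \<partial>M) - enn2ereal (\<integral>\<^sup>+x. ennreal (f x) * lneg (q x) \<partial>M)"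
    if q: "q \<in> dens_set M" for q
    unfolding f_def by (rule obj_density[OF p Hm H0]) (use q in \<open>simp add: dens_set_def\<close>)
  have PLq: "PL_obj M N r \<epsilon> K p q =
      enn2ereal (\<integral>\<^sup>+x. ennreal (f x) * lpos (q x) \<partial>M) - enn2ereal (\<integral>\<^sup>+x. ennreal (f x) * lneg (q x) \<partial>M)"
    if q: "q \<in> dens_set M" for q
  proof -
    have qm: "q \<in> borel_measurable M" using q by (simp add: dens_set_def)
    have fin: "(\<integral>\<^sup>+x. ennreal (f x) * lpos (q x) \<partial>M) < top" by (rule gibbs_fin[OF fdens q fp fm])
    show ?thesis using PL_eq[OF p qm] fin unfolding f_def H_def by simp
  qed
  show obj': "\<forall>q\<in>dens_set M. PL_obj M N r \<epsilon> K p q =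
              eexp (density M (\<lambda>x. ennreal (p x)))
                (\<lambda>x. elog (q x) * ereal (choice_kernel M N r \<epsilon> K p x))"
    using PLq obj unfolding H_def by simp
  have le: "PL_obj M N r \<epsilon> K p q \<le> PL_obj M N r \<epsilon> K p f" if q: "q \<in> dens_set M" for q
    unfolding PLq[OF q] PLq[OF fdens] by (rule gibbs_le[OF fdens q fp fm])
  have max: "is_PL_maximizer M N r \<epsilon> K p f" unfolding is_PL_maximizer_def using fdens le by auto
  then show "is_PL_maximizer M N r \<epsilon> K p (\<lambda>x. p x * choice_kernel M N r \<epsilon> K p x)"
    unfolding f_def[abs_def] H_def .
  show "(\<lambda>x. p x * choice_kernel M N r \<epsilon> K p x) \<in> dens_set M" using fdens unfolding f_def[abs_def] H_def .
  show "(\<integral>\<^sup>+x. ennreal (p x * choice_kernel M N r \<epsilon> K p x * \<bar>ln (p x * choice_kernel M N r \<epsilon> K p x)\<bar>) \<partial>M) < \<infinity>"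
    using FE(3) unfolding H_def .
  have char: "is_PL_maximizer M N r \<epsilon> K p q \<longleftrightarrow> q \<in> dens_set M \<and> (AE x in M. q x = f x)" for q
  proof
    assume qmax: "is_PL_maximizer M N r \<epsilon> K p q"
    then have q: "q \<in> dens_set M" and ge: "PL_obj M N r \<epsilon> K p f \<le> PL_obj M N r \<epsilon> K p q"
      using fdens unfolding is_PL_maximizer_def by auto
    have "PL_obj M N r \<epsilon> K p q = PL_obj M N r \<epsilon> K p f" using ge le[OF q] by (rule antisym[rotated])
    then have "AE x in M. q x = f x" unfolding PLq[OF q] PLq[OF fdens] by (rule gibbs_eq[OF fdens q fp fm])
    then show "q \<in> dens_set M \<and> (AE x in M. q x = f x)" using q by simp
  next
    assume "q \<in> dens_set M \<and> (AE x in M. q x = f x)"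
    then have q: "q \<in> dens_set M" and ae: "AE x in M. q x = f x" by auto
    have "PL_obj M N r \<epsilon> K p q = PL_obj M N r \<epsilon> K p f"
      unfolding PLq[OF q] PLq[OF fdens] using ae
      by (intro arg_cong2[where f="\<lambda>a b. enn2ereal a - enn2ereal b"] nn_integral_cong_AE) auto
    then show "is_PL_maximizer M N r \<epsilon> K p q" using max q unfolding is_PL_maximizer_def by simp
  qed
  show "\<forall>q. is_PL_maximizer M N r \<epsilon> K p q \<longleftrightarrow>
               q \<in> dens_set M \<and> (AE x in M. q x = p x * choice_kernel M N r \<epsilon> K p x)"
    using char unfolding f_def H_def by simp
qed

end

theorem theorem1:
  fixes M :: "'a measure" and N :: "'w measure" and r :: "'a \<Rightarrow> real"
    and \<epsilon> :: "'w \<Rightarrow> 'a \<Rightarrow> real" and K :: nat and p0 :: "'a \<Rightarrow> real"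
  assumes "sigma_finite_measure M"
    and "r \<in> borel_measurable M"
    and "prob_space N"
    and "(\<lambda>(\<omega>, x). \<epsilon> \<omega> x) \<in> borel_measurable (N \<Otimes>\<^sub>M M)"
    and "K \<ge> 2"
    and "p0 \<in> dens_set M"
    and "(\<integral>\<^sup>+x. ennreal (p0 x * \<bar>ln (p0 x)\<bar>) \<partial>M) < \<infinity>"
  shows "(\<exists>p. p 0 = p0 \<and> (\<forall>t. is_PL_maximizer M N r \<epsilon> K (p t) (p (Suc t))))
    \<and> (\<forall>p. p 0 = p0 \<and> (\<forall>t. is_PL_maximizer M N r \<epsilon> K (p t) (p (Suc t))) \<longrightarrow>
         (\<forall>t.
           (\<forall>q\<in>dens_set M. PL_obj M N r \<epsilon> K (p t) q =
              eexp (density M (\<lambda>x. ennreal (p t x)))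
                (\<lambda>x. elog (q x) * ereal (choice_kernel M N r \<epsilon> K (p t) x)))
         \<and> is_PL_maximizer M N r \<epsilon> K (p t) (\<lambda>x. p t x * choice_kernel M N r \<epsilon> K (p t) x)
         \<and> (\<forall>q. is_PL_maximizer M N r \<epsilon> K (p t) q \<longleftrightarrow>
               q \<in> dens_set M \<and> (AE x in M. q x = p t x * choice_kernel M N r \<epsilon> K (p t) x))
         \<and> (AE x in M. p (Suc t) x = p t x * choice_kernel M N r \<epsilon> K (p t) x)))"
  proof -
  interpret PLs M N r \<epsilon> K by (rule PLs.intro) (rule assms)+
  define Inv where "Inv q \<longleftrightarrow> q \<in> dens_set M \<and> (\<integral>\<^sup>+x. ennreal (q x * \<bar>ln (q x)\<bar>) \<partial>M) < \<infinity>" for q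
  have Inv0: "Inv p0" unfolding Inv_def using assms(6,7) by simp
  have InvS: "Inv (\<lambda>x. q x * choice_kernel M N r \<epsilon> K q x)" if "Inv q" for q
    using that step_dens step_ent unfolding Inv_def by simp
  define P where "P t = rec_nat p0 (\<lambda>_ q x. q x * choice_kernel M N r \<epsilon> K q x) t" for t
  have P0: "P 0 = p0" unfolding P_def by simp
  have PS: "P (Suc t) = (\<lambda>x. P t x * choice_kernel M N r \<epsilon> K (P t) x)" for t unfolding P_def by simp
  have InvP: "Inv (P t)" for t
  proof (induction t)
    case 0 then show ?case using Inv0 P0 by simp
  next
    case (Suc t) then show ?case unfolding PS by (rule InvS)
  qed
  have ex: "\<exists>p. p 0 = p0 \<and> (\<forall>t. is_PL_maximizer M N r \<epsilon> K (p t) (p (Suc t)))"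
  proof (intro exI[of _ P] conjI allI)
    show "P 0 = p0" by (rule P0)
    fix t
    show "is_PL_maximizer M N r \<epsilon> K (P t) (P (Suc t))"
      unfolding PS using InvP[of t] step_max unfolding Inv_def by blast
  qed
  have all: "(\<forall>t.
           (\<forall>q\<in>dens_set M. PL_obj M N r \<epsilon> K (p t) q =
              eexp (density M (\<lambda>x. ennreal (p t x)))
                (\<lambda>x. elog (q x) * ereal (choice_kernel M N r \<epsilon> K (p t) x)))
         \<and> is_PL_maximizer M N r \<epsilon> K (p t) (\<lambda>x. p t x * choice_kernel M N r \<epsilon> K (p t) x)
         \<and> (\<forall>q. is_PL_maximizer M N r \<epsilon> K (p t) q \<longleftrightarrow>
               q \<in> dens_set M \<and> (AE x in M. q x = p t x * choice_kernel M N r \<epsilon> K (p t) x))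
         \<and> (AE x in M. p (Suc t) x = p t x * choice_kernel M N r \<epsilon> K (p t) x))"
    if hp: "p 0 = p0 \<and> (\<forall>t. is_PL_maximizer M N r \<epsilon> K (p t) (p (Suc t)))" for p
  proof -
    have chain: "is_PL_maximizer M N r \<epsilon> K (p t) (p (Suc t))" for t using hp by blast
    have InvQ: "Inv (p t)" for t
    proof (induction t)
      case 0 then show ?case using Inv0 hp by simp
    next
      case (Suc t)
      then have d: "p t \<in> dens_set M" and e: "(\<integral>\<^sup>+x. ennreal (p t x * \<bar>ln (p t x)\<bar>) \<partial>M) < \<infinity>"
        unfolding Inv_def by auto
      have c: "p (Suc t) \<in> dens_set M \<and> (AE x in M. p (Suc t) x = p t x * choice_kernel M N r \<epsilon> K (p t) x)"
        using step_char[OF d e] chain[of t] by blast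
      have "(\<integral>\<^sup>+x. ennreal (p (Suc t) x * \<bar>ln (p (Suc t) x)\<bar>) \<partial>M)
          = (\<integral>\<^sup>+x. ennreal (p t x * choice_kernel M N r \<epsilon> K (p t) x * \<bar>ln (p t x * choice_kernel M N r \<epsilon> K (p t) x)\<bar>) \<partial>M)"
        using c by (intro nn_integral_cong_AE) auto
      also have "\<dots> < \<infinity>" by (rule step_ent[OF d e])
      finally show ?case using c unfolding Inv_def by simp
    qed
    show ?thesis
    proof
      fix t
      have d: "p t \<in> dens_set M" and e: "(\<integral>\<^sup>+x. ennreal (p t x * \<bar>ln (p t x)\<bar>) \<partial>M) < \<infinity>"
        using InvQ[of t] unfolding Inv_def by auto
      show "(\<forall>q\<in>dens_set M. PL_obj M N r \<epsilon> K (p t) q =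
              eexp (density M (\<lambda>x. ennreal (p t x)))
                (\<lambda>x. elog (q x) * ereal (choice_kernel M N r \<epsilon> K (p t) x)))
         \<and> is_PL_maximizer M N r \<epsilon> K (p t) (\<lambda>x. p t x * choice_kernel M N r \<epsilon> K (p t) x)
         \<and> (\<forall>q. is_PL_maximizer M N r \<epsilon> K (p t) q \<longleftrightarrow>
               q \<in> dens_set M \<and> (AE x in M. q x = p t x * choice_kernel M N r \<epsilon> K (p t) x))
         \<and> (AE x in M. p (Suc t) x = p t x * choice_kernel M N r \<epsilon> K (p t) x)"
        using step_obj[OF d e] step_max[OF d e] step_char[OF d e] chain[of t] by blast
    qed
  qed
  show ?thesis using ex all by blast
qed

end
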